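(* Let $\delta$ be a symbolic ultrametric on a nonempty finite set $X$. Then its graph representation $G_\delta$ is a complete edge-colored permutation graph.
   Context: For a nonempty finite set $X$ and $k\in\mathbb{N}$, a surjective map $\delta:X\times X\to\{1,\dots,k\}$ is a symbolic ultrametric if (U1) $\delta(x,y)=\delta(y,x)$ for all $x,y$; (U2) $|\{\delta(x,y),\delta(x,z),\delta(y,z)\}|\le2$ for all $x,y,z$; (U3) there is no 4-element subset $\{x,y,u,v\}$ of $X$ with $\delta(x,y)=\delta(y,u)=\delta(u,v)\ne\delta(v,y)=\delta(x,v)=\delta(x,u)$. Its graph representation $G_\delta$ is the complete graph on $X$ in which each edge $\{x,y\}$ ($x\neq y$) receives color $\delta(x,y)$. A complete edge-colored graph $G=(V,E_1,\dots,E_k)$ is a complete graph on finite $V$ with edges partitioned into nonempty color classes $E_i$; $G_{|i}=(V,E_i)$. A labeling is a bijection $\ell:V\to\{1,\dots,|V|\}$. A graph $(V,E)$ with labeling $\ell$ is a simple permutation graph of a permutation $\pi$ if for all $u,v$ with $\ell(u)>\ell(v)$: $\{u,v\}\in E$ iff $\pi^{-1}(\ell(u))<\pi^{-1}(\ell(v))$. $G$ is a complete edge-colored permutation graph if there exist a labeling $\ell$ and permutations $\pi_1,\dots,\pi_k$ with $(G_{|i},\ell)$ a simple permutation graph of $\pi_i$ for all $i$. *)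

theory Defs
  imports "HOL-Combinatorics.Permutations"
begin

definition symbolic_ultrametric :: "'a set \<Rightarrow> nat \<Rightarrow> ('a \<Rightarrow> 'a \<Rightarrow> nat) \<Rightarrow> bool" where
  "symbolic_ultrametric X k \<delta> \<longleftrightarrow>
     (\<lambda>(x,y). \<delta> x y) ` (X \<times> X) = {1..k} \<and>
     (\<forall>x\<in>X. \<forall>y\<in>X. \<delta> x y = \<delta> y x) \<and>
     (\<forall>x\<in>X. \<forall>y\<in>X. \<forall>z\<in>X. card {\<delta> x y, \<delta> x z, \<delta> y z} \<le> 2) \<and>
     \<not> (\<exists>x\<in>X. \<exists>y\<in>X. \<exists>u\<in>X. \<exists>v\<in>X. card {x,y,u,v} = 4 \<and>
          \<delta> x y = \<delta> y u \<and> \<delta> y u = \<delta> u v \<and> \<delta> u v \<noteq> \<delta> v y \<and>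
          \<delta> v y = \<delta> x v \<and> \<delta> x v = \<delta> x u)"

definition complete_edges :: "'a set \<Rightarrow> 'a set set" where
  "complete_edges V = {{u, v} | u v. u \<in> V \<and> v \<in> V \<and> u \<noteq> v}"

definition graph_rep :: "'a set \<Rightarrow> ('a \<Rightarrow> 'a \<Rightarrow> nat) \<Rightarrow> nat \<Rightarrow> 'a set set" where
  "graph_rep X \<delta> i = {{x, y} | x y. x \<in> X \<and> y \<in> X \<and> x \<noteq> y \<and> \<delta> x y = i}"

definition labeling :: "'a set \<Rightarrow> ('a \<Rightarrow> nat) \<Rightarrow> bool" where
  "labeling V lab \<longleftrightarrow> bij_betw lab V {1..card V}"

definition simple_perm_graph :: "'a set \<Rightarrow> 'a set set \<Rightarrow> ('a \<Rightarrow> nat) \<Rightarrow> (nat \<Rightarrow> nat) \<Rightarrow> bool" where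
  "simple_perm_graph V E lab \<pi> \<longleftrightarrow>
     (\<forall>u\<in>V. \<forall>v\<in>V. lab u > lab v \<longrightarrow> ({u, v} \<in> E \<longleftrightarrow> inv \<pi> (lab u) < inv \<pi> (lab v)))"

definition edge_colored_complete :: "'a set \<Rightarrow> (nat \<Rightarrow> 'a set set) \<Rightarrow> nat \<Rightarrow> bool" where
  "edge_colored_complete V E k \<longleftrightarrow> finite V \<and>
     (\<Union>i\<in>{1..k}. E i) = complete_edges V \<and>
     (\<forall>i\<in>{1..k}. \<forall>j\<in>{1..k}. i \<noteq> j \<longrightarrow> E i \<inter> E j = {})"

definition complete_edge_colored_perm_graph :: "'a set \<Rightarrow> (nat \<Rightarrow> 'a set set) \<Rightarrow> nat \<Rightarrow> bool" where
  "complete_edge_colored_perm_graph V E k \<longleftrightarrow> edge_colored_complete V E k \<and>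
     (\<exists>lab. labeling V lab \<and>
        (\<forall>i\<in>{1..k}. \<exists>\<pi>. \<pi> permutes {1..card V} \<and> simple_perm_graph V (E i) lab \<pi>))"

end

theory Submission
  imports Defs
begin


definition su :: "'a set \<Rightarrow> ('a \<Rightarrow> 'a \<Rightarrow> nat) \<Rightarrow> bool" where
  "su X d \<longleftrightarrow> (\<forall>x\<in>X. \<forall>y\<in>X. d x y = d y x) \<and>
    (\<forall>x\<in>X. \<forall>y\<in>X. \<forall>z\<in>X. d x y = d x z \<or> d x y = d y z \<or> d x z = d y z) \<and>
    (\<forall>x\<in>X. \<forall>y\<in>X. \<forall>u\<in>X. \<forall>v\<in>X. distinct [x,y,u,v] \<longrightarrow> d x y = d y u \<longrightarrow> d y u = d u v
       \<longrightarrow> d v y = d x v \<longrightarrow> d x v = d x u \<longrightarrow> d u v = d v y)"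

lemma su_subset: "su X d \<Longrightarrow> Y \<subseteq> X \<Longrightarrow> su Y d"
  unfolding su_def by blast

lemma suD1: "su X d \<Longrightarrow> x \<in> X \<Longrightarrow> y \<in> X \<Longrightarrow> d x y = d y x"
  unfolding su_def by blast

lemma suD2: "su X d \<Longrightarrow> x \<in> X \<Longrightarrow> y \<in> X \<Longrightarrow> z \<in> X \<Longrightarrow> d x y = d x z \<or> d x y = d y z \<or> d x z = d y z"
  unfolding su_def by blast

lemma suD3: assumes "su X d" "x\<in>X" "y\<in>X" "u\<in>X" "v\<in>X" "distinct [x,y,u,v]" "d x y = d y u"
  "d y u = d u v" "d v y = d x v" "d x v = d x u" shows "d u v = d v y"
proof -
  have H: "\<forall>x\<in>X. \<forall>y\<in>X. \<forall>u\<in>X. \<forall>v\<in>X. distinct [x,y,u,v] \<longrightarrow> d x y = d y u \<longrightarrow> d y u = d u v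
       \<longrightarrow> d v y = d x v \<longrightarrow> d x v = d x u \<longrightarrow> d u v = d v y"
    using assms(1) unfolding su_def by (rule conjunct2[THEN conjunct2])
  show ?thesis using H[rule_format, OF assms(2-10)] .
qed

lemma su_split:
  assumes "finite X" "su X d" "2 \<le> card X"
  shows "\<exists>A B c. A \<noteq> {} \<and> B \<noteq> {} \<and> A \<inter> B = {} \<and> A \<union> B = X \<and> (\<forall>a\<in>A. \<forall>b\<in>B. d a b = c)"
  using assms
proof (induction X rule: finite_induct)
  case empty
  then show ?case by simp
next
  case (insert x F)
  have sym: "\<And>y z. y \<in> insert x F \<Longrightarrow> z \<in> insert x F \<Longrightarrow> d y z = d z y"
    using suD1[OF insert.prems(1)] by blast
  have U2: "\<And>y z w. y \<in> insert x F \<Longrightarrow> z \<in> insert x F \<Longrightarrow> w \<in> insert x F \<Longrightarrow>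
     d y z = d y w \<or> d y z = d z w \<or> d y w = d z w"
    using suD2[OF insert.prems(1)] by blast
  have U3: "\<And>y1 y2 y3 y4. y1 \<in> insert x F \<Longrightarrow> y2 \<in> insert x F \<Longrightarrow> y3 \<in> insert x F \<Longrightarrow> y4 \<in> insert x F \<Longrightarrow>
     distinct [y1,y2,y3,y4] \<Longrightarrow> d y1 y2 = d y2 y3 \<Longrightarrow> d y2 y3 = d y3 y4
       \<Longrightarrow> d y4 y2 = d y1 y4 \<Longrightarrow> d y1 y4 = d y1 y3 \<Longrightarrow> d y3 y4 = d y4 y2"
    using suD3[OF insert.prems(1)] by blast
  show ?case
  proof (cases "card F < 2")
    case True
    then have "card F = 1" using insert by simp
    then obtain y where F: "F = {y}" by (auto simp: card_Suc_eq)
    show ?thesis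
      by (rule exI[of _ "{x}"], rule exI[of _ "{y}"], rule exI[of _ "d x y"]) (use F insert in auto)
  next
    case False
    then obtain A B c where AB: "A \<noteq> {}" "B \<noteq> {}" "A \<inter> B = {}" "A \<union> B = F" "\<forall>a\<in>A. \<forall>b\<in>B. d a b = c"
      using insert su_subset[OF insert.prems(1)] by (meson not_less subset_insertI)
    show ?thesis
    proof (cases "\<forall>a\<in>A. d x a = c")
      case True
      show ?thesis
      proof (rule exI[of _ A], rule exI[of _ "insert x B"], rule exI[of _ c])
        have "d a x = c" if "a \<in> A" for a using True sym[of a x] that AB by auto
        then show "A \<noteq> {} \<and> insert x B \<noteq> {} \<and> A \<inter> insert x B = {} \<and> A \<union> insert x B = insert x F \<and>
          (\<forall>a\<in>A. \<forall>b\<in>insert x B. d a b = c)"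
          using AB insert.hyps by blast
      qed
    next
      case nA: False
      show ?thesis
      proof (cases "\<forall>b\<in>B. d x b = c")
        case True
        show ?thesis
          apply (rule exI[of _ "insert x A"], rule exI[of _ B], rule exI[of _ c])
          using AB True insert.hyps by blast
      next
        case False
        then obtain b where b: "b \<in> B" "d x b \<noteq> c" by blast
        from nA obtain a where a: "a \<in> A" "d x a \<noteq> c" by blast
        define p where "p = d x a"
        have xb: "d x b = p" using U2[of x a b] a b AB unfolding p_def by auto
        have pc: "p \<noteq> c" using a p_def by simp
        have xy: "d x y = p \<or> d x y = c" if "y \<in> F" for y
        proof (cases "y \<in> A")
          case True
          then show ?thesis using U2[of x b y] b AB sym[of b y] xb that by auto
        next
          case False
          then have "y \<in> B" using AB that by auto
          then show ?thesis using U2[of x a y] a AB sym[of a y] p_def that by auto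
        qed
        define S where "S = {y\<in>F. d x y = c}"
        show ?thesis
        proof (cases "S = {}")
          case True
          show ?thesis
            apply (rule exI[of _ "{x}"], rule exI[of _ F], rule exI[of _ p])
            using True xy AB insert.hyps S_def by auto
        next
          case Sne: False
          have cross: "d s t = c" if s: "s \<in> S" and t: "t \<in> F - S" for s t
          proof -
            have sF: "s \<in> F" and xs: "d x s = c" using s S_def by auto
            have tF: "t \<in> F" and xt: "d x t = p" using t S_def xy by auto
            have st: "s \<noteq> t" using s t by auto
            have stcp: "d s t = c \<or> d s t = p"
              using U2[of s t x] sF tF sym[of s x] sym[of t x] xs xt pc by auto
            show ?thesis
            proof (cases "s \<in> A \<and> t \<in> A")
              case True
              have "d t s \<noteq> p"
              proof
                assume ts: "d t s = p"
                have "b \<noteq> x" "b \<noteq> t" "b \<noteq> s" using b True AB insert.hyps by auto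
                moreover have "x \<noteq> t" "x \<noteq> s" using insert.hyps sF tF by auto
                ultimately have "d t s = d s x"
                  using U3[of b x t s] True b AB sF tF st xb xt ts sym[of b x] sym[of s x] xs
                    sym[of b s] sym[of b t] by auto
                then show False using ts xs sym[of s x] sF pc by auto
              qed
              then show ?thesis using stcp sym[of s t] sF tF by auto
            next
              case F1: False
              show ?thesis
              proof (cases "s \<in> B \<and> t \<in> B")
                case True
                have "d t s \<noteq> p"
                proof
                  assume ts: "d t s = p"
                  have "a \<noteq> x" "a \<noteq> t" "a \<noteq> s" using a True AB insert.hyps by auto
                  moreover have "x \<noteq> t" "x \<noteq> s" using insert.hyps sF tF by auto
                  ultimately have "d t s = d s x"
                    using U3[of a x t s] True a AB sF tF st p_def xt ts sym[of a x] sym[of s x] xs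
                      by auto
                  then show False using ts xs sym[of s x] sF pc by auto
                qed
                then show ?thesis using stcp sym[of s t] sF tF by auto
              next
                case False
                then show ?thesis using F1 AB sF tF sym[of s t] by auto
              qed
            qed
          qed
          show ?thesis
          proof (rule exI[of _ S], rule exI[of _ "insert x (F - S)"], rule exI[of _ c])
            have "d s x = c" if "s \<in> S" for s using that S_def sym[of s x] by auto
            then show "S \<noteq> {} \<and> insert x (F - S) \<noteq> {} \<and> S \<inter> insert x (F - S) = {} \<and> S \<union> insert x (F - S) = insert x F \<and>
              (\<forall>a\<in>S. \<forall>b\<in>insert x (F - S). d a b = c)"
              using Sne cross S_def insert.hyps by blast
          qed
        qed
      qed
    qed
  qed
qed



lemma su_order:
  assumes "finite X" "su X d"
  shows "\<exists>lab. bij_betw lab X {1..card X} \<and>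
    (\<forall>u\<in>X. \<forall>v\<in>X. \<forall>w\<in>X. lab u < lab v \<longrightarrow> lab v < lab w \<longrightarrow> d u w = d u v \<or> d u w = d v w)"
  using assms
proof (induction "card X" arbitrary: X rule: less_induct)
  case less
  show ?case
  proof (cases "card X < 2")
    case True
    show ?thesis
    proof (rule exI[of _ "\<lambda>_. 1"], intro conjI)
      show "bij_betw (\<lambda>_. 1::nat) X {1..card X}"
      proof (cases "card X = 0")
        case True
        then show ?thesis using less.prems by (simp add: bij_betw_def)
      next
        case False
        then have "card X = 1" using True by simp
        then obtain y where "X = {y}" by (auto simp: card_Suc_eq)
        then show ?thesis by (simp add: bij_betw_def)
      qed
    qed simp
  next
    case False
    then obtain A B c where AB: "A \<noteq> {}" "B \<noteq> {}" "A \<inter> B = {}" "A \<union> B = X" "\<forall>a\<in>A. \<forall>b\<in>B. d a b = c"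
      using su_split[OF less.prems] by (meson not_less)
    have fA: "finite A" and fB: "finite B" using AB less.prems by auto
    have cX: "card X = card A + card B" using AB fA fB card_Un_disjoint by fastforce
    have cA: "card A > 0" "card B > 0" using AB fA fB by auto
    obtain la where la: "bij_betw la A {1..card A}"
      "\<forall>u\<in>A. \<forall>v\<in>A. \<forall>w\<in>A. la u < la v \<longrightarrow> la v < la w \<longrightarrow> d u w = d u v \<or> d u w = d v w"
      using less.hyps[of A] cX cA fA su_subset[OF less.prems(2)] AB by auto
    obtain lb where lb: "bij_betw lb B {1..card B}"
      "\<forall>u\<in>B. \<forall>v\<in>B. \<forall>w\<in>B. lb u < lb v \<longrightarrow> lb v < lb w \<longrightarrow> d u w = d u v \<or> d u w = d v w"
      using less.hyps[of B] cX cA fB su_subset[OF less.prems(2)] AB by auto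
    define lab where "lab x = (if x \<in> A then la x else card A + lb x)" for x
    have b1: "bij_betw lab A {1..card A}"
      using la(1) by (rule bij_betw_cong[THEN iffD1, rotated]) (simp add: lab_def)
    have b2': "bij_betw (\<lambda>x. card A + lb x) B {card A + 1..card A + card B}"
    proof -
      have "bij_betw ((+) (card A)) {1..card B} {card A + 1..card A + card B}"
        by (simp add: bij_betw_def add.commute)
      from bij_betw_trans[OF lb(1) this] show ?thesis by (simp add: comp_def)
    qed
    have b2: "bij_betw lab B {card A + 1..card A + card B}"
      using b2' by (rule bij_betw_cong[THEN iffD1, rotated]) (use AB in \<open>auto simp add: lab_def\<close>)
    have "bij_betw lab (A \<union> B) ({1..card A} \<union> {card A + 1..card A + card B})"
      by (rule bij_betw_combine[OF b1 b2]) auto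
    moreover have "{1..card A} \<union> {card A + 1..card A + card B} = {1..card X}"
      using cX by auto
    ultimately have bij: "bij_betw lab X {1..card X}" using AB by simp
    have labA: "lab a \<le> card A" if "a \<in> A" for a
      using b1 that by (auto simp: bij_betw_def)
    have labB: "lab b > card A" if "b \<in> B" for b
      using b2 that by (metis bij_betwE atLeastAtMost_iff Suc_eq_plus1 Suc_le_eq)
    have symd: "\<And>y z. y \<in> X \<Longrightarrow> z \<in> X \<Longrightarrow> d y z = d z y" using suD1[OF less.prems(2)] by blast
    have P: "d u w = d u v \<or> d u w = d v w" if u: "u \<in> X" and v: "v \<in> X" and w: "w \<in> X"
      and uv: "lab u < lab v" and vw: "lab v < lab w" for u v w
    proof (cases "u \<in> A")
      case uA: True
      show ?thesis
      proof (cases "v \<in> A")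
        case vA: True
        show ?thesis
        proof (cases "w \<in> A")
          case True
          then show ?thesis using la(2) uA vA uv vw by (simp add: lab_def)
        next
          case False
          then have "w \<in> B" using w AB by auto
          then show ?thesis using AB(5) uA vA by auto
        qed
      next
        case False
        then have vB: "v \<in> B" using v AB by auto
        have "w \<notin> A" using labA labB vB vw by fastforce
        then have "w \<in> B" using w AB by auto
        then show ?thesis using AB(5) uA vB by auto
      qed
    next
      case False
      then have uB: "u \<in> B" using u AB by auto
      have vB: "v \<in> B" "v \<notin> A" using labA labB uB uv v AB by fastforce+
      have wB: "w \<in> B" "w \<notin> A" using labA labB vB vw w AB by fastforce+
      show ?thesis using lb(2) uB vB wB False uv vw by (simp add: lab_def)
    qed
    show ?thesis using bij P by blast
  qed
qed

lemma pos_lemma: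
  assumes fin: "finite X"
    and trans: "\<And>u v w. u\<in>X \<Longrightarrow> v\<in>X \<Longrightarrow> w\<in>X \<Longrightarrow> R u v \<Longrightarrow> R v w \<Longrightarrow> R u w"
    and irr: "\<And>u. u\<in>X \<Longrightarrow> \<not> R u u"
    and tot: "\<And>u v. u\<in>X \<Longrightarrow> v\<in>X \<Longrightarrow> u \<noteq> v \<Longrightarrow> R u v \<or> R v u"
  defines "pos \<equiv> (\<lambda>u. card {w\<in>X. R w u} + 1)"
  shows "\<And>u v. u\<in>X \<Longrightarrow> v\<in>X \<Longrightarrow> pos u < pos v \<longleftrightarrow> R u v"
    and "bij_betw pos X {1..card X}"
proof -
  have mono: "pos u < pos v" if "u\<in>X" "v\<in>X" "R u v" for u v
  proof -
    have "{w\<in>X. R w u} \<subset> {w\<in>X. R w v}"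
      using that trans irr by blast
    then have "card {w\<in>X. R w u} < card {w\<in>X. R w v}"
      by (rule psubset_card_mono[rotated]) (use fin in auto)
    then show ?thesis unfolding pos_def by simp
  qed
  show iff: "pos u < pos v \<longleftrightarrow> R u v" if "u\<in>X" "v\<in>X" for u v
    using mono[of u v] mono[of v u] tot[of u v] that by fastforce
  have inj: "inj_on pos X"
    by (rule inj_onI) (metis mono tot less_irrefl)
  have sub: "pos ` X \<subseteq> {1..card X}"
  proof
    fix y assume "y \<in> pos ` X"
    then obtain u where u: "u \<in> X" "y = pos u" by blast
    have "{w\<in>X. R w u} \<subseteq> X - {u}" using irr by auto
    then have "card {w\<in>X. R w u} \<le> card (X - {u})" by (rule card_mono[rotated]) (use fin in auto)
    also have "\<dots> = card X - 1" using u fin by simp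
    finally show "y \<in> {1..card X}" using u fin card_gt_0_iff[of X] unfolding pos_def by auto
  qed
  have "card (pos ` X) = card {1..card X}" using card_image[OF inj] by simp
  then have "pos ` X = {1..card X}" using sub by (intro card_subset_eq) auto
  then show "bij_betw pos X {1..card X}" using inj by (simp add: bij_betw_def)
qed



lemma card3_le2: "card {a, b, c::nat} \<le> 2 \<Longrightarrow> a = b \<or> a = c \<or> b = c"
  by (cases "a = b"; cases "a = c"; cases "b = c") auto

lemma su_of_symbolic:
  assumes "symbolic_ultrametric X k d"
  shows "su X d"
proof -
  have s: "\<forall>x\<in>X. \<forall>y\<in>X. d x y = d y x" using assms unfolding symbolic_ultrametric_def by blast
  have u2: "\<forall>x\<in>X. \<forall>y\<in>X. \<forall>z\<in>X. card {d x y, d x z, d y z} \<le> 2"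
    using assms unfolding symbolic_ultrametric_def by blast
  have u3: "\<not> (\<exists>x\<in>X. \<exists>y\<in>X. \<exists>u\<in>X. \<exists>v\<in>X. card {x,y,u,v} = 4 \<and>
          d x y = d y u \<and> d y u = d u v \<and> d u v \<noteq> d v y \<and>
          d v y = d x v \<and> d x v = d x u)"
    using assms unfolding symbolic_ultrametric_def by blast
  have c4: "distinct [x,y,u,v] \<Longrightarrow> card {x,y,u,v} = 4" for x y u v :: 'a by simp
  have A2: "\<forall>x\<in>X. \<forall>y\<in>X. \<forall>z\<in>X. d x y = d x z \<or> d x y = d y z \<or> d x z = d y z"
    using u2 card3_le2 by blast
  have A3: "\<forall>x\<in>X. \<forall>y\<in>X. \<forall>u\<in>X. \<forall>v\<in>X. distinct [x,y,u,v] \<longrightarrow> d x y = d y u \<longrightarrow> d y u = d u v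
       \<longrightarrow> d v y = d x v \<longrightarrow> d x v = d x u \<longrightarrow> d u v = d v y"
  proof (intro ballI impI)
    fix x y u v assume "x \<in> X" "y \<in> X" "u \<in> X" "v \<in> X" "distinct [x,y,u,v]" "d x y = d y u" "d y u = d u v"
       "d v y = d x v" "d x v = d x u"
    then show "d u v = d v y" using u3 c4[of x y u v] by blast
  qed
  show ?thesis unfolding su_def using s A2 A3 by blast
qed

lemma graph_rep_mem:
  fixes d :: "'a \<Rightarrow> 'a \<Rightarrow> nat"
  assumes "\<forall>x\<in>X. \<forall>y\<in>X. d x y = d y x" "u \<in> X" "v \<in> X" "u \<noteq> v"
  shows "{u, v} \<in> graph_rep X d i \<longleftrightarrow> d u v = i"
proof
  assume "{u, v} \<in> graph_rep X d i"
  then obtain x y where "{u,v} = {x,y}" "x \<in> X" "y \<in> X" "d x y = i" unfolding graph_rep_def by blast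
  then show "d u v = i" using assms by (metis doubleton_eq_iff)
next
  assume "d u v = i" then show "{u, v} \<in> graph_rep X d i" using assms unfolding graph_rep_def by blast
qed

theorem corollary6p4:
  fixes X :: "'a set" and k :: nat and \<delta> :: "'a \<Rightarrow> 'a \<Rightarrow> nat"
  assumes "finite X" and "X \<noteq> {}" and "symbolic_ultrametric X k \<delta>"
  shows "complete_edge_colored_perm_graph X (graph_rep X \<delta>) k"
proof -
  have su: "su X \<delta>" using su_of_symbolic[OF assms(3)] .
  have symd: "\<forall>x\<in>X. \<forall>y\<in>X. \<delta> x y = \<delta> y x" using suD1[OF su] by blast
  have img: "(\<lambda>(x,y). \<delta> x y) ` (X \<times> X) = {1..k}" using assms(3) unfolding symbolic_ultrametric_def by blast
  have rng: "\<delta> x y \<in> {1..k}" if "x \<in> X" "y \<in> X" for x y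
    using img that by blast
  have ecc: "edge_colored_complete X (graph_rep X \<delta>) k"
    unfolding edge_colored_complete_def
  proof (intro conjI)
    show "finite X" by fact
    show "(\<Union>i\<in>{1..k}. graph_rep X \<delta> i) = complete_edges X"
      unfolding complete_edges_def graph_rep_def using rng by blast
    show "\<forall>i\<in>{1..k}. \<forall>j\<in>{1..k}. i \<noteq> j \<longrightarrow> graph_rep X \<delta> i \<inter> graph_rep X \<delta> j = {}"
    proof (intro ballI impI)
      fix i j :: nat assume "i \<noteq> j"
      show "graph_rep X \<delta> i \<inter> graph_rep X \<delta> j = {}"
      proof (rule ccontr)
        assume "graph_rep X \<delta> i \<inter> graph_rep X \<delta> j \<noteq> {}"
        then obtain e where e: "e \<in> graph_rep X \<delta> i" "e \<in> graph_rep X \<delta> j" by blast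
        then obtain u v where uv: "e = {u,v}" "u \<in> X" "v \<in> X" "u \<noteq> v" unfolding graph_rep_def by blast
        show False using e uv graph_rep_mem[OF symd uv(2-4)] \<open>i \<noteq> j\<close> by auto
      qed
    qed
  qed
  obtain lab where lab: "bij_betw lab X {1..card X}"
    "\<forall>u\<in>X. \<forall>v\<in>X. \<forall>w\<in>X. lab u < lab v \<longrightarrow> lab v < lab w \<longrightarrow> \<delta> u w = \<delta> u v \<or> \<delta> u w = \<delta> v w"
    using su_order[OF assms(1) su] by blast
  have labinj: "inj_on lab X" using lab(1) bij_betw_def by blast
  have perm: "\<exists>\<pi>. \<pi> permutes {1..card X} \<and> simple_perm_graph X (graph_rep X \<delta> i) lab \<pi>" for i
  proof -
    define R where "R u v \<longleftrightarrow> (lab u < lab v \<and> \<delta> u v \<noteq> i) \<or> (lab v < lab u \<and> \<delta> u v = i)" for u v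
    have Rtrans: "R u w" if X3: "u\<in>X" "v\<in>X" "w\<in>X" and r: "R u v" "R v w" for u v w
    proof -
      have P: "\<delta> a c = \<delta> a b \<or> \<delta> a c = \<delta> b c" if "a \<in> X" "b \<in> X" "c \<in> X"
        "lab a < lab b" "lab b < lab c" for a b c
        using lab(2) that by blast
      have s1: "\<delta> u v = \<delta> v u" "\<delta> u w = \<delta> w u" "\<delta> v w = \<delta> w v"
        using symd X3 by auto
      have uw: "lab u = lab w \<Longrightarrow> u = w" using labinj X3 inj_on_def by metis
      note P1 = P[of u v w] P[of u w v] P[of v u w] P[of v w u] P[of w u v] P[of w v u]
      show ?thesis
      proof (cases "lab u = lab w")
        case True
        then show ?thesis using uw r s1 unfolding R_def by auto
      next
        case False
        then have "lab u < lab w \<or> lab w < lab u" by auto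
        then show ?thesis
        proof
          assume "lab u < lab w"
          then show ?thesis using r s1 P1 X3 unfolding R_def by auto
        next
          assume "lab w < lab u"
          then show ?thesis using r s1 P1 X3 unfolding R_def by auto
        qed
      qed
    qed
    have Rirr: "\<not> R u u" if "u \<in> X" for u unfolding R_def by simp
    have Rtot: "R u v \<or> R v u" if "u\<in>X" "v\<in>X" "u \<noteq> v" for u v
    proof -
      have "lab u \<noteq> lab v" using labinj that inj_on_def by metis
      then show ?thesis unfolding R_def using symd that by (metis linorder_neqE_nat)
    qed
    define pos where "pos = (\<lambda>u. card {w\<in>X. R w u} + 1)"
    have posiff: "pos u < pos v \<longleftrightarrow> R u v" if "u\<in>X" "v\<in>X" for u v
      unfolding pos_def
      apply (rule pos_lemma(1)[of X R u v])
      using assms(1) Rtrans Rirr Rtot that apply blast+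
      done
    have posbij: "bij_betw pos X {1..card X}"
      unfolding pos_def
      apply (rule pos_lemma(2)[of X R])
      using assms(1) Rtrans Rirr Rtot apply blast+
      done
    define \<sigma> where "\<sigma> m = (if m \<in> {1..card X} then pos (inv_into X lab m) else m)" for m
    have "bij_betw (pos \<circ> inv_into X lab) {1..card X} {1..card X}"
      by (rule bij_betw_trans[OF bij_betw_inv_into[OF lab(1)] posbij])
    then have "bij_betw \<sigma> {1..card X} {1..card X}"
      by (rule bij_betw_cong[THEN iffD1, rotated]) (simp add: \<sigma>_def)
    then have sp: "\<sigma> permutes {1..card X}"
      by (rule bij_imp_permutes) (auto simp: \<sigma>_def)
    have sl: "\<sigma> (lab u) = pos u" if "u \<in> X" for u
    proof -
      have "lab u \<in> {1..card X}" using lab(1) that bij_betwE by blast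
      then show ?thesis unfolding \<sigma>_def using inv_into_f_f[OF labinj that] by simp
    qed
    have ii: "inv (inv \<sigma>) = \<sigma>" using inv_inv_eq[OF permutes_bij[OF sp]] .
    show ?thesis
    proof (intro exI conjI)
      show "inv \<sigma> permutes {1..card X}" using permutes_inv[OF sp] .
      show "simple_perm_graph X (graph_rep X \<delta> i) lab (inv \<sigma>)"
        unfolding simple_perm_graph_def ii
      proof (intro ballI impI)
        fix u v assume uv: "u \<in> X" "v \<in> X" "lab v < lab u"
        then have "u \<noteq> v" by auto
        then show "({u, v} \<in> graph_rep X \<delta> i) = (\<sigma> (lab u) < \<sigma> (lab v))"
          using graph_rep_mem[OF symd uv(1,2)] sl uv posiff[of u v] unfolding R_def by auto
      qed
    qed
  qed
  show ?thesis
    unfolding complete_edge_colored_perm_graph_def labeling_def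
    using ecc lab(1) perm by blast
qed

end
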